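(* Let $d\ge 2$, $n\ge 2$, $M=(d-1)(n-1)$, and orient the $M$-cells and $(M-1)$-cells of $X(d,n)$ so that the $\mathfrak S_n$-action changes orientations according to $\operatorname{sgn}^{d-1}$ and the cellular boundary of each $M$-cell is the sum of the $(M-1)$-cells in its boundary with coefficients $+1$. Let $b$ be any $\mathfrak S_n$-equivariant integral cellular $(M-1)$-cochain on $X(d,n)$ with values in $\mathcal Z$. Then there are integers $x_1,\dots,x_{n-1}$ (namely $x_j$ is the value of $b$ on the oriented $(M-1)$-cells $\check c(\sigma_1\prec_d\cdots\sigma_j\prec_{d-1}\sigma_{j+1}\cdots\prec_d\sigma_n)$, which is independent of $\sigma$) such that the coboundary $\delta b$ takes the value \[ x_1\binom n1+x_2\binom n2+\dots+x_{n-1}\binom n{n-1} \] on every oriented $M$-cell of $X(d,n)$.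
   Context: $X(d,n)$ is the regular CW complex with cells $\check c(\sigma,\mathbf i)$ indexed by strings $(\sigma_1\prec_{i_1}\cdots\prec_{i_{n-1}}\sigma_n)$, $\sigma\in\mathfrak S_n$, $\mathbf i\in\{1,\dots,d\}^{n-1}$, of dimension $\sum_j i_j-(n-1)$; $\mathfrak S_n$ acts freely by $\pi\cdot(\sigma,\mathbf i)=(\pi\sigma,\mathbf i)$. Face relation: $(\sigma,\mathbf i)\preceq(\sigma',\mathbf i')$ iff for all letters $a$ before $b$ in $\sigma'$: either $a$ before $b$ in $\sigma$ with $m_{\sigma,\mathbf i}(a,b)\le m_{\sigma',\mathbf i'}(a,b)$, or $b$ before $a$ in $\sigma$ with $m_{\sigma,\mathbf i}(a,b)<m_{\sigma',\mathbf i'}(a,b)$, where for letters at positions $p<q$ of $\sigma$, $m_{\sigma,\mathbf i}=\min\{i_p,\dots,i_{q-1}\}$. In particular the $M$-cells are $\check c(\sigma_1\prec_d\cdots\prec_d\sigma_n)$, the $(M-1)$-cells are $\check c(\sigma_1\prec_d\cdots\sigma_j\prec_{d-1}\sigma_{j+1}\cdots\prec_d\sigma_n)$, $1\le j<n$. $\mathcal Z\cong\mathbb Z$ is the $\mathfrak S_n$-module $H_{M-1}(S(W_n^{\oplus(d-1)});\mathbb Z)$, on which $\pi$ acts by multiplication by $(\operatorname{sgn}\pi)^{d-1}$; an equivariant cochain $b$ satisfies $b(\pi\cdot c)=\pi\cdot b(c)$ for oriented cells $c$. *)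

theory Defs
  imports "HOL-Combinatorics.Permutations"
begin

text \<open>Cells of X(d,n) are indexed by strings (sigma, i): sigma is a word listing
the letters 1..n exactly once, i is a list of length n-1 with entries in {1..d}
(i ! (p-1) is the index i_p, 0-based positions in the lists).\<close>

type_synonym cell = "nat list \<times> nat list"

definition is_perm_word :: "nat \<Rightarrow> nat list \<Rightarrow> bool" where
  "is_perm_word n \<sigma> \<longleftrightarrow> distinct \<sigma> \<and> set \<sigma> = {1..n}"

definition cells :: "nat \<Rightarrow> nat \<Rightarrow> cell set" where
  "cells d n = {(\<sigma>, i). is_perm_word n \<sigma> \<and> length i = n - 1 \<and> (\<forall>k\<in>set i. 1 \<le> k \<and> k \<le> d)}"

definition cell_dim :: "nat \<Rightarrow> cell \<Rightarrow> nat" where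
  "cell_dim n c = sum_list (snd c) - (n - 1)"

definition pos :: "nat list \<Rightarrow> nat \<Rightarrow> nat" where
  "pos \<sigma> a = (LEAST k. k < length \<sigma> \<and> \<sigma> ! k = a)"

definition mval :: "nat list \<Rightarrow> nat list \<Rightarrow> nat \<Rightarrow> nat \<Rightarrow> nat" where
  "mval \<sigma> i a b = (let p = min (pos \<sigma> a) (pos \<sigma> b); q = max (pos \<sigma> a) (pos \<sigma> b)
                   in Min ((\<lambda>k. i ! k) ` {p..<q}))"

definition before :: "nat list \<Rightarrow> nat \<Rightarrow> nat \<Rightarrow> bool" where
  "before \<sigma> a b \<longleftrightarrow> pos \<sigma> a < pos \<sigma> b"

definition face :: "cell \<Rightarrow> cell \<Rightarrow> bool" where
  "face c c' \<longleftrightarrow> (case c of (\<sigma>, i) \<Rightarrow> case c' of (\<sigma>', i') \<Rightarrow>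
     (\<forall>a\<in>set \<sigma>'. \<forall>b\<in>set \<sigma>'. before \<sigma>' a b \<longrightarrow>
        ((before \<sigma> a b \<and> mval \<sigma> i a b \<le> mval \<sigma>' i' a b) \<or>
         (before \<sigma> b a \<and> mval \<sigma> i a b < mval \<sigma>' i' a b))))"

definition cell_act :: "(nat \<Rightarrow> nat) \<Rightarrow> cell \<Rightarrow> cell" where
  "cell_act \<pi> c = (map \<pi> (fst c), snd c)"

text \<open>Orientation convention: every cell c of dimension M or M-1 carries a chosen
orientation e_c; pi maps e_c to sgn(pi)^(d-1) e_(pi.c), and the cellular boundary of
e_tau (tau an M-cell) is the sum of e_c over the (M-1)-cells c in its boundary.
An integral cochain is given by its values b c = b(e_c).\<close>

definition Mdim :: "nat \<Rightarrow> nat \<Rightarrow> nat" where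
  "Mdim d n = (d - 1) * (n - 1)"

definition cochain_on_act :: "nat \<Rightarrow> (cell \<Rightarrow> int) \<Rightarrow> (nat \<Rightarrow> nat) \<Rightarrow> cell \<Rightarrow> int" where
  "cochain_on_act d b \<pi> c = sign \<pi> ^ (d - 1) * b (cell_act \<pi> c)"

text \<open>Action of pi on Z = H_(M-1)(S(W_n^(d-1))), i.e. multiplication by sgn^(d-1).\<close>
definition Z_act :: "nat \<Rightarrow> (nat \<Rightarrow> nat) \<Rightarrow> int \<Rightarrow> int" where
  "Z_act d \<pi> z = sign \<pi> ^ (d - 1) * z"

definition equivariant_cochain :: "nat \<Rightarrow> nat \<Rightarrow> (cell \<Rightarrow> int) \<Rightarrow> bool" where
  "equivariant_cochain d n b \<longleftrightarrow>
     (\<forall>\<pi> c. \<pi> permutes {1..n} \<longrightarrow> c \<in> cells d n \<longrightarrow> cell_dim n c = Mdim d n - 1 \<longrightarrow>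
        cochain_on_act d b \<pi> c = Z_act d \<pi> (b c))"

definition coboundary :: "nat \<Rightarrow> nat \<Rightarrow> (cell \<Rightarrow> int) \<Rightarrow> cell \<Rightarrow> int" where
  "coboundary d n b \<tau> = (\<Sum>c\<in>{c \<in> cells d n. cell_dim n c = Mdim d n - 1 \<and> face c \<tau>}. b c)"

definition idx_j :: "nat \<Rightarrow> nat \<Rightarrow> nat \<Rightarrow> nat list" where
  "idx_j d n j = (replicate (n - 1) d)[j - 1 := d - 1]"

end

theory Submission
  imports Defs
begin



lemma pos_nth: assumes "distinct s" "k < length s" shows "pos s (s!k) = k"
  unfolding pos_def
  by (rule Least_equality) (use assms nth_eq_iff_index_eq in auto)

lemma pos_in: assumes "a \<in> set s" shows "pos s a < length s \<and> s ! pos s a = a"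
proof -
  obtain k where "k < length s" "s!k = a" using assms by (auto simp: in_set_conv_nth)
  then show ?thesis unfolding pos_def by (metis (mono_tags, lifting) LeastI)
qed

lemma pos_inj: assumes "a \<in> set s" "b \<in> set s" "pos s a = pos s b" shows "a = b"
  using pos_in assms by metis

lemma sum_le: "\<forall>k\<in>set i. k \<le> d \<Longrightarrow> sum_list i \<le> d * length i"
  by (induction i) auto

lemma all_d: "\<forall>k\<in>set i. k \<le> d \<Longrightarrow> sum_list i = d * length i \<Longrightarrow> i = replicate (length i) d"
proof (induction i)
  case (Cons x xs)
  have "sum_list xs \<le> d * length xs" using Cons.prems sum_le by auto
  with Cons.prems have "x = d" "sum_list xs = d * length xs" by auto
  then show ?case using Cons by auto
qed simp

lemma one_less: "\<forall>k\<in>set i. k \<le> d \<Longrightarrow> sum_list i + 1 = d * length i \<Longrightarrow>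
   \<exists>k<length i. i = (replicate (length i) d)[k := d - 1]"
proof (induction i)
  case (Cons x xs)
  have le: "sum_list xs \<le> d * length xs" using Cons.prems sum_le by auto
  show ?case
  proof (cases "x = d")
    case True
    then have "sum_list xs + 1 = d * length xs" using Cons.prems by simp
    with Cons obtain k where "k < length xs" "xs = (replicate (length xs) d)[k := d - 1]" by auto
    then show ?thesis using True by (intro exI[of _ "Suc k"]) auto
  next
    case False
    with Cons.prems le have "x = d - 1" "sum_list xs = d * length xs" by auto
    then have "xs = replicate (length xs) d" using all_d Cons.prems by auto
    then have "x # xs = (d # replicate (length xs) d)[0 := d - 1]" using \<open>x = d - 1\<close> by simp
    then show ?thesis by (intro exI[of _ 0]) simp
  qed
qed simp

lemma sum_upd: "k < m \<Longrightarrow> sum_list ((replicate m (d::nat))[k := d - 1]) + 1 = d * m" if "d \<ge> 1"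
proof (induction m arbitrary: k)
  case (Suc m)
  then show ?case using that by (cases k) (auto simp: sum_list_replicate)
qed simp




lemma minr: assumes "p < (q::nat)" "\<forall>k\<in>{p..<q}. f k = (if k = c then e else d)" "e < (d::nat)"
  shows "Min (f ` {p..<q}) = (if p \<le> c \<and> c < q then e else d)"
proof (cases "p \<le> c \<and> c < q")
  case True
  have "f ` {p..<q} \<subseteq> {e, d}" using assms by auto
  moreover have "e \<in> f ` {p..<q}" using True assms by (metis atLeastLessThan_iff image_eqI)
  ultimately show ?thesis using True assms(3)
    by (intro Min_eqI) auto
next
  case False
  have "f ` {p..<q} = {d}" using assms False by auto
  then show ?thesis using False by auto
qed

lemma idx_nth: "1 \<le> j \<Longrightarrow> j < n \<Longrightarrow> k < n - 1 \<Longrightarrow> idx_j d n j ! k = (if k = j - 1 then d - 1 else d)"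
  unfolding idx_j_def by (auto simp: nth_list_update)

lemma mval_rep: assumes "distinct s" "length s = n" "a \<in> set s" "b \<in> set s" "a \<noteq> b" "d \<ge> 1"
  shows "mval s (replicate (n-1) d) a b = d"
proof -
  let ?p = "min (pos s a) (pos s b)" and ?q = "max (pos s a) (pos s b)"
  have ne: "pos s a \<noteq> pos s b" using pos_inj assms by metis
  have "?q < n" using pos_in assms by auto
  then have "Min ((\<lambda>k. replicate (n-1) d ! k) ` {?p..<?q}) = (if ?p \<le> ?q \<and> ?q < ?q then 0 else d)"
    using ne assms by (intro minr) auto
  then show ?thesis unfolding mval_def Let_def by simp
qed

lemma mval_idx: assumes "distinct s" "length s = n" "a \<in> set s" "b \<in> set s" "a \<noteq> b" "d \<ge> 2"
  "1 \<le> j" "j < n"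
  shows "mval s (idx_j d n j) a b = (if min (pos s a) (pos s b) < j \<and> j \<le> max (pos s a) (pos s b) then d - 1 else d)"
proof -
  let ?p = "min (pos s a) (pos s b)" and ?q = "max (pos s a) (pos s b)"
  have ne: "pos s a \<noteq> pos s b" using pos_inj assms by metis
  have "?q < n" using pos_in assms by auto
  then have "Min ((\<lambda>k. idx_j d n j ! k) ` {?p..<?q}) = (if ?p \<le> j - 1 \<and> j - 1 < ?q then d - 1 else d)"
    using ne assms by (intro minr) (auto simp: idx_nth)
  moreover have "(?p \<le> j - 1 \<and> j - 1 < ?q) = (?p < j \<and> j \<le> ?q)" using assms(7) by linarith
  ultimately show ?thesis unfolding mval_def Let_def by simp
qed




lemma perm_len: "is_perm_word n s \<Longrightarrow> length s = n"
  unfolding is_perm_word_def by (metis card_atLeastAtMost diff_Suc_1 distinct_card)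

lemma face_C: assumes "is_perm_word n s" "is_perm_word n s'" "d \<ge> 2" "1 \<le> j" "j < n"
  shows "face (s', idx_j d n j) (s, replicate (n-1) d) \<longleftrightarrow>
    (\<forall>a\<in>set s. \<forall>b\<in>set s. pos s a < pos s b \<longrightarrow> pos s' a < pos s' b \<or> (pos s' b < j \<and> j \<le> pos s' a))"
proof -
  have ds: "distinct s" "distinct s'" "set s' = set s" "length s = n" "length s' = n"
    using assms perm_len unfolding is_perm_word_def by auto
  have "(before s' a b \<and> mval s' (idx_j d n j) a b \<le> mval s (replicate (n - 1) d) a b \<or>
         before s' b a \<and> mval s' (idx_j d n j) a b < mval s (replicate (n - 1) d) a b)
       = (pos s' a < pos s' b \<or> (pos s' b < j \<and> j \<le> pos s' a))"
    if "a \<in> set s" "b \<in> set s" "pos s a < pos s b" for a b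
  proof -
    have ne: "a \<noteq> b" using that by auto
    have 1: "mval s (replicate (n - 1) d) a b = d" using mval_rep ds that ne assms by auto
    have 2: "mval s' (idx_j d n j) a b = (if min (pos s' a) (pos s' b) < j \<and> j \<le> max (pos s' a) (pos s' b) then d - 1 else d)"
      using mval_idx[of s' n a b d j] ds that ne assms by auto
    have 3: "pos s' a \<noteq> pos s' b" using pos_inj ds that ne by metis
    show ?thesis unfolding 1 2 before_def using 3 assms(3) by auto
  qed
  note X = this[unfolded before_def]
  show ?thesis unfolding face_def prod.case before_def
  proof (intro iffI ballI impI)
    fix a b assume "\<forall>a\<in>set s. \<forall>b\<in>set s. pos s a < pos s b \<longrightarrow>
      pos s' a < pos s' b \<and> mval s' (idx_j d n j) a b \<le> mval s (replicate (n - 1) d) a b \<or>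
      pos s' b < pos s' a \<and> mval s' (idx_j d n j) a b < mval s (replicate (n - 1) d) a b"
      "a \<in> set s" "b \<in> set s" "pos s a < pos s b"
    then show "pos s' a < pos s' b \<or> pos s' b < j \<and> j \<le> pos s' a" using X[of a b] by blast
  next
    fix a b assume "\<forall>a\<in>set s. \<forall>b\<in>set s. pos s a < pos s b \<longrightarrow>
      pos s' a < pos s' b \<or> pos s' b < j \<and> j \<le> pos s' a"
      "a \<in> set s" "b \<in> set s" "pos s a < pos s b"
    then show "pos s' a < pos s' b \<and> mval s' (idx_j d n j) a b \<le> mval s (replicate (n - 1) d) a b \<or>
      pos s' b < pos s' a \<and> mval s' (idx_j d n j) a b < mval s (replicate (n - 1) d) a b" using X[of a b] by blast
  qed
qed



definition R :: "nat list \<Rightarrow> nat \<Rightarrow> nat \<Rightarrow> bool" where "R s a b \<longleftrightarrow> pos s a < pos s b"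

lemma face_iff: assumes "is_perm_word n s" "is_perm_word n s'" "d \<ge> 2" "1 \<le> j" "j < n"
  shows "face (s', idx_j d n j) (s, replicate (n-1) d) \<longleftrightarrow>
    sorted_wrt (R s) (take j s') \<and> sorted_wrt (R s) (drop j s')"
proof -
  have ds: "distinct s" "distinct s'" "set s' = set s" "length s = n" "length s' = n"
    using assms perm_len unfolding is_perm_word_def by auto
  have T: "sorted_wrt (R s) (take j s') \<longleftrightarrow> (\<forall>k l. k < l \<longrightarrow> l < j \<longrightarrow> R s (s'!k) (s'!l))"
  proof -
    have "length (take j s') = j" using ds assms by simp
    then show ?thesis unfolding sorted_wrt_iff_nth_less by (simp add: nth_take)
  qed
  have D: "sorted_wrt (R s) (drop j s') \<longleftrightarrow> (\<forall>k l. k < l \<longrightarrow> l < n - j \<longrightarrow> R s (s'!(j+k)) (s'!(j+l)))"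
  proof -
    have "length (drop j s') = n - j" using ds assms by simp
    moreover have "\<And>i. i < n - j \<Longrightarrow> drop j s' ! i = s' ! (j + i)" using ds by (simp add: nth_drop)
    ultimately show ?thesis unfolding sorted_wrt_iff_nth_less by (metis order.strict_trans)
  qed
  have S: "(\<forall>k l. k < l \<longrightarrow> l < n \<longrightarrow> (l < j \<or> j \<le> k) \<longrightarrow> R s (s'!k) (s'!l))
     \<longleftrightarrow> sorted_wrt (R s) (take j s') \<and> sorted_wrt (R s) (drop j s')"
    unfolding T D
  proof (intro iffI conjI allI impI)
    fix k l assume "\<forall>k l. k < l \<longrightarrow> l < n \<longrightarrow> (l < j \<or> j \<le> k) \<longrightarrow> R s (s'!k) (s'!l)" "k < l" "l < n - j"
    then show "R s (s'!(j+k)) (s'!(j+l))" by auto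
  next
    fix k l assume "\<forall>k l. k < l \<longrightarrow> l < n \<longrightarrow> (l < j \<or> j \<le> k) \<longrightarrow> R s (s'!k) (s'!l)" "k < l" "l < j"
    then show "R s (s'!k) (s'!l)" using assms by auto
  next
    fix k l assume h: "(\<forall>k l. k < l \<longrightarrow> l < j \<longrightarrow> R s (s'!k) (s'!l)) \<and>
        (\<forall>k l. k < l \<longrightarrow> l < n - j \<longrightarrow> R s (s'!(j+k)) (s'!(j+l)))" "k < l" "l < n" "l < j \<or> j \<le> k"
    show "R s (s'!k) (s'!l)"
    proof (cases "l < j")
      case True then show ?thesis using h by auto
    next
      case False
      then have "j \<le> k" using h by auto
      then show ?thesis using h(1)[THEN conjunct2, rule_format, of "k - j" "l - j"] h by auto
    qed
  qed
  have "(\<forall>a\<in>set s. \<forall>b\<in>set s. pos s a < pos s b \<longrightarrow> pos s' a < pos s' b \<or> (pos s' b < j \<and> j \<le> pos s' a))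
     \<longleftrightarrow> (\<forall>k l. k < l \<longrightarrow> l < n \<longrightarrow> (l < j \<or> j \<le> k) \<longrightarrow> R s (s'!k) (s'!l))"
  proof (intro iffI allI impI ballI)
    fix k l assume h: "\<forall>a\<in>set s. \<forall>b\<in>set s. pos s a < pos s b \<longrightarrow> pos s' a < pos s' b \<or> (pos s' b < j \<and> j \<le> pos s' a)"
      "k < l" "l < n" "l < j \<or> j \<le> k"
    have in1: "s'!k \<in> set s" "s'!l \<in> set s" using ds h by (metis nth_mem order.strict_trans)+
    have p: "pos s' (s'!k) = k" "pos s' (s'!l) = l" using pos_nth ds h by auto
    have ne: "s'!k \<noteq> s'!l" using p h(2) by (metis less_irrefl)
    have "pos s (s'!k) \<noteq> pos s (s'!l)" using pos_inj in1 ne by metis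
    moreover have "\<not> pos s (s'!l) < pos s (s'!k)"
      using h(1)[rule_format, OF in1(2) in1(1)] p h by auto
    ultimately show "R s (s'!k) (s'!l)" unfolding R_def by auto
  next
    fix a b assume h: "\<forall>k l. k < l \<longrightarrow> l < n \<longrightarrow> (l < j \<or> j \<le> k) \<longrightarrow> R s (s'!k) (s'!l)"
      "a \<in> set s" "b \<in> set s" "pos s a < pos s b"
    have ne: "a \<noteq> b" using h by auto
    have pa: "pos s' a < n" "s'!pos s' a = a" "pos s' b < n" "s'!pos s' b = b" using pos_in ds h by metis+
    have "pos s' a \<noteq> pos s' b" using pos_inj ds h ne by metis
    moreover have "\<not> (pos s' b < pos s' a \<and> (pos s' a < j \<or> j \<le> pos s' b))"
      using h(1)[rule_format, of "pos s' b" "pos s' a"] pa h(4) unfolding R_def by auto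
    ultimately show "pos s' a < pos s' b \<or> (pos s' b < j \<and> j \<le> pos s' a)" by auto
  qed
  then show ?thesis using face_C[OF assms] S by simp
qed




lemma sorted_s: "distinct s \<Longrightarrow> sorted_wrt (R s) s"
  unfolding sorted_wrt_iff_nth_less R_def by (simp add: pos_nth)

lemma R_uniq: assumes "distinct s" "set xs \<subseteq> set s" "set ys \<subseteq> set s"
  "sorted_wrt (R s) xs" "sorted_wrt (R s) ys" "set xs = set ys" shows "xs = ys"
proof (rule map_sorted_distinct_set_unique[of "pos s"])
  show "inj_on (pos s) (set xs \<union> set ys)" using assms pos_inj by (intro inj_onI) (metis Un_iff subsetD)
  have "sorted_wrt (<) (map (pos s) xs)" "sorted_wrt (<) (map (pos s) ys)"
    using assms(4,5) unfolding sorted_wrt_map R_def by auto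
  then show "sorted (map (pos s) xs)" "distinct (map (pos s) xs)" "sorted (map (pos s) ys)" "distinct (map (pos s) ys)"
    unfolding strict_sorted_iff by auto
qed (use assms in auto)

definition g :: "nat list \<Rightarrow> nat set \<Rightarrow> nat list" where
  "g s S = filter (\<lambda>x. x \<in> S) s @ filter (\<lambda>x. x \<notin> S) s"

lemma count: assumes "is_perm_word n s" "j \<le> n"
  shows "card {s'. is_perm_word n s' \<and> sorted_wrt (R s) (take j s') \<and> sorted_wrt (R s) (drop j s')} = n choose j"
proof -
  have ds: "distinct s" "set s = {1..n}" "length s = n" using assms perm_len unfolding is_perm_word_def by auto
  have sf: "\<And>P. sorted_wrt (R s) (filter P s)" using sorted_wrt_filter sorted_s ds(1) by blast
  let ?A = "{S. S \<subseteq> {1..n} \<and> card S = j}"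
  have len: "length (filter (\<lambda>x. x \<in> S) s) = j" if "S \<in> ?A" for S
  proof -
    have "{x. x \<in> S} \<inter> set s = S" using that ds by auto
    then show ?thesis using distinct_length_filter[OF ds(1)] that by simp
  qed
  have tk: "take j (g s S) = filter (\<lambda>x. x \<in> S) s" "drop j (g s S) = filter (\<lambda>x. x \<notin> S) s" if "S \<in> ?A" for S
    using len[OF that] unfolding g_def by auto
  have inj: "inj_on (g s) ?A"
  proof (rule inj_onI)
    fix S T assume h: "S \<in> ?A" "T \<in> ?A" "g s S = g s T"
    have "set (take j (g s S)) = S" using tk[OF h(1)] h(1) ds by auto
    moreover have "set (take j (g s T)) = T" using tk[OF h(2)] h(2) ds by auto
    ultimately show "S = T" using h(3) by metis
  qed
  have img: "{s'. is_perm_word n s' \<and> sorted_wrt (R s) (take j s') \<and> sorted_wrt (R s) (drop j s')} = g s ` ?A"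
  proof (intro equalityI subsetI)
    fix s' assume "s' \<in> {s'. is_perm_word n s' \<and> sorted_wrt (R s) (take j s') \<and> sorted_wrt (R s) (drop j s')}"
    then have h: "is_perm_word n s'" "sorted_wrt (R s) (take j s')" "sorted_wrt (R s) (drop j s')" by auto
    have ds': "distinct s'" "set s' = {1..n}" "length s' = n" using h perm_len unfolding is_perm_word_def by auto
    define S where "S = set (take j s')"
    have SA: "S \<in> ?A" unfolding S_def using ds' assms(2) distinct_card[of "take j s'"]
      by (auto dest: in_set_takeD)
    have dj: "set (take j s') \<inter> set (drop j s') = {}" using set_take_disj_set_drop_if_distinct ds'(1) by fastforce
    have un: "set (take j s') \<union> set (drop j s') = set s'" by (metis append_take_drop_id set_append)
    have dr: "set (drop j s') = set s' - S" unfolding S_def using dj un by blast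
    have "take j s' = filter (\<lambda>x. x \<in> S) s"
      by (rule R_uniq[OF ds(1)]) (use h ds ds' sf in \<open>auto simp: S_def dest: in_set_takeD\<close>)
    moreover have "drop j s' = filter (\<lambda>x. x \<notin> S) s"
      by (rule R_uniq[OF ds(1)]) (use h ds ds' dr sf in \<open>auto dest: in_set_dropD\<close>)
    ultimately have "s' = g s S" unfolding g_def by (metis append_take_drop_id)
    then show "s' \<in> g s ` ?A" using SA by auto
  next
    fix s' assume "s' \<in> g s ` ?A"
    then obtain S where S: "S \<in> ?A" "s' = g s S" by auto
    have "distinct (g s S)" unfolding g_def distinct_append using ds(1) by (simp add: disjoint_iff)
    moreover have "set (g s S) = set s" unfolding g_def set_append set_filter by blast
    ultimately have "is_perm_word n s'" unfolding is_perm_word_def S(2) using ds(2) by simp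
    moreover have "sorted_wrt (R s) (take j s')" "sorted_wrt (R s) (drop j s')"
      unfolding S(2) tk[OF S(1)] using sf by auto
    ultimately show "s' \<in> {s'. is_perm_word n s' \<and> sorted_wrt (R s) (take j s') \<and> sorted_wrt (R s) (drop j s')}" by auto
  qed
  show ?thesis unfolding img card_image[OF inj] using n_subsets[of "{1..n}" j] by simp
qed




lemma sum_ge: "\<forall>k\<in>set i. 1 \<le> k \<Longrightarrow> length i \<le> sum_list i"
  by (induction i) auto

lemma idx_cell: assumes "d \<ge> 2" "1 \<le> j" "j < n"
  shows "length (idx_j d n j) = n - 1" "\<forall>k\<in>set (idx_j d n j). 1 \<le> k \<and> k \<le> d"
    "sum_list (idx_j d n j) + 1 = d * (n - 1)"
proof -
  show "length (idx_j d n j) = n - 1" unfolding idx_j_def by simp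
  have "set (idx_j d n j) \<subseteq> insert (d - 1) (set (replicate (n-1) d))"
    unfolding idx_j_def by (rule set_update_subset_insert)
  then show "\<forall>k\<in>set (idx_j d n j). 1 \<le> k \<and> k \<le> d" using assms by auto
  show "sum_list (idx_j d n j) + 1 = d * (n - 1)" unfolding idx_j_def
    using sum_upd[of d "j-1" "n-1"] assms by auto
qed

lemma Mcell: assumes "d \<ge> 2" "n \<ge> 2" "(\<sigma>, i) \<in> cells d n" "cell_dim n (\<sigma>, i) = Mdim d n"
  shows "i = replicate (n-1) d" "is_perm_word n \<sigma>"
proof -
  have h: "is_perm_word n \<sigma>" "length i = n - 1" "\<forall>k\<in>set i. 1 \<le> k \<and> k \<le> d" using assms(3) unfolding cells_def by auto
  have "(d-1)*(n-1) + (n-1) = d*(n-1)" using assms(1) by (cases d) auto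
  moreover have "(d-1)*(n-1) \<ge> 1" using assms(1,2) by (simp add: Suc_le_eq)
  moreover have "sum_list i - (n-1) = (d-1)*(n-1)" using assms(4) unfolding cell_dim_def Mdim_def by simp
  ultimately have "sum_list i = d * (n - 1)" by linarith
  then show "i = replicate (n-1) d" using all_d[of i d] h(2,3) by auto
  show "is_perm_word n \<sigma>" using h by simp
qed

lemma Mm1cell: assumes "d \<ge> 2" "n \<ge> 2"
  shows "(c \<in> cells d n \<and> cell_dim n c = Mdim d n - 1) \<longleftrightarrow>
    (\<exists>j\<in>{1..<n}. \<exists>\<sigma>. is_perm_word n \<sigma> \<and> c = (\<sigma>, idx_j d n j))"
proof
  have eq: "(d-1)*(n-1) + (n-1) = d*(n-1)" using assms(1) by (cases d) auto
  have ge: "(d-1)*(n-1) \<ge> 1" using assms(1,2) by (simp add: Suc_le_eq)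
  {
    assume "c \<in> cells d n \<and> cell_dim n c = Mdim d n - 1"
    then obtain \<sigma> i where c: "c = (\<sigma>, i)" "is_perm_word n \<sigma>" "length i = n - 1" "\<forall>k\<in>set i. 1 \<le> k \<and> k \<le> d"
       "sum_list i - (n-1) = (d-1)*(n-1) - 1"
      unfolding cells_def cell_dim_def Mdim_def by auto
    have "length i \<le> sum_list i" using sum_ge[of i] c(4) by auto
    then have "sum_list i + 1 = d * (n - 1)" using c(3,5) eq ge by linarith
    then have "sum_list i + 1 = d * length i" using c(3) by simp
    then have "\<exists>k<length i. i = (replicate (length i) d)[k := d - 1]" using one_less[of i d] c(4) by auto
    then obtain k where k: "k < n - 1" "i = (replicate (n-1) d)[k := d - 1]" using c(3) by auto
    then have "i = idx_j d n (k+1)" unfolding idx_j_def by simp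
    then show "\<exists>j\<in>{1..<n}. \<exists>\<sigma>. is_perm_word n \<sigma> \<and> c = (\<sigma>, idx_j d n j)"
      using c k by (intro bexI[of _ "k+1"]) auto
  }
  assume "\<exists>j\<in>{1..<n}. \<exists>\<sigma>. is_perm_word n \<sigma> \<and> c = (\<sigma>, idx_j d n j)"
  then obtain j \<sigma> where j: "1 \<le> j" "j < n" "is_perm_word n \<sigma>" "c = (\<sigma>, idx_j d n j)" by auto
  note ic = idx_cell[OF assms(1) j(1,2)]
  show "c \<in> cells d n \<and> cell_dim n c = Mdim d n - 1"
  proof -
    have "sum_list (idx_j d n j) - (n - 1) = (d-1)*(n-1) - 1" using ic(3) eq ge by linarith
    then show ?thesis unfolding cells_def cell_dim_def Mdim_def using j ic by auto
  qed
qed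

lemma idx_inj: assumes "d \<ge> 2" "1 \<le> j" "j < n" "1 \<le> j'" "j' < n" "idx_j d n j = idx_j d n j'" shows "j = j'"
proof (rule ccontr)
  assume "j \<noteq> j'"
  have "idx_j d n j ! (j-1) = d - 1" using idx_nth assms(2,3) by auto
  moreover have "idx_j d n j' ! (j-1) = d" using idx_nth assms(2-5) \<open>j \<noteq> j'\<close> by auto
  ultimately show False using assms(1,6) by auto
qed




lemma inv_b: assumes "equivariant_cochain d n b" "\<pi> permutes {1..n}" "c \<in> cells d n" "cell_dim n c = Mdim d n - 1"
  shows "b (cell_act \<pi> c) = b c"
proof -
  have "sign \<pi> ^ (d - 1) * b (cell_act \<pi> c) = sign \<pi> ^ (d - 1) * b c"
    using assms unfolding equivariant_cochain_def cochain_on_act_def Z_act_def by blast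
  then show ?thesis by simp
qed

lemma perm_from: assumes "is_perm_word n s"
  shows "\<exists>\<pi>. \<pi> permutes {1..n} \<and> map \<pi> [1..<n+1] = s"
proof -
  have ds: "distinct s" "set s = {1..n}" "length s = n" using assms perm_len unfolding is_perm_word_def by auto
  define \<pi> where "\<pi> = (\<lambda>k. if k \<in> {1..n} then s!(k-1) else k)"
  have m: "map \<pi> [1..<n+1] = s"
    by (rule nth_equalityI) (auto simp: ds \<pi>_def nth_upt simp del: upt_Suc)
  have inj: "inj_on \<pi> {1..n}"
  proof (rule inj_onI)
    fix x y assume h: "x \<in> {1..n}" "y \<in> {1..n}" "\<pi> x = \<pi> y"
    then have "s!(x-1) = s!(y-1)" unfolding \<pi>_def by simp
    then have "x - 1 = y - 1" using nth_eq_iff_index_eq[OF ds(1)] h ds(3) by auto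
    then show "x = y" using h by auto
  qed
  have sub: "\<pi> ` {1..n} \<subseteq> {1..n}"
  proof
    fix y assume "y \<in> \<pi> ` {1..n}"
    then obtain x where "x \<in> {1..n}" "y = s!(x-1)" unfolding \<pi>_def by auto
    then show "y \<in> {1..n}" using ds by (metis atLeastAtMost_iff diff_less le_less_trans less_one not_le nth_mem)
  qed
  have "\<pi> ` {1..n} = {1..n}" using endo_inj_surj[OF _ sub inj] by simp
  then have "\<pi> permutes {1..n}" using inj by (intro bij_imp_permutes) (auto simp: bij_betw_def \<pi>_def)
  then show ?thesis using m by blast
qed

theorem lemma4p2:
  fixes d n :: nat and b :: "cell \<Rightarrow> int"
  assumes "d \<ge> 2" and "n \<ge> 2"
    and "equivariant_cochain d n b"
  shows "\<exists>x :: nat \<Rightarrow> int.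
           (\<forall>j\<in>{1..<n}. \<forall>\<sigma>. is_perm_word n \<sigma> \<longrightarrow> b (\<sigma>, idx_j d n j) = x j) \<and>
           (\<forall>\<tau>\<in>cells d n. cell_dim n \<tau> = Mdim d n \<longrightarrow>
              coboundary d n b \<tau> = (\<Sum>j=1..<n. x j * int (n choose j)))"
proof -
  define x where "x j = b ([1..<n+1], idx_j d n j)" for j
  have pw: "is_perm_word n [1..<n+1]" unfolding is_perm_word_def by auto
  have P1: "b (\<sigma>, idx_j d n j) = x j" if jj: "j \<in> {1..<n}" "is_perm_word n \<sigma>" for j \<sigma>
  proof -
    obtain \<pi> where \<pi>: "\<pi> permutes {1..n}" "map \<pi> [1..<n+1] = \<sigma>" using perm_from[OF jj(2)] by blast
    have "([1..<n+1], idx_j d n j) \<in> cells d n \<and> cell_dim n ([1..<n+1], idx_j d n j) = Mdim d n - 1"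
      using Mm1cell[OF assms(1,2)] jj pw by blast
    then have "b (cell_act \<pi> ([1..<n+1], idx_j d n j)) = x j"
      unfolding x_def using inv_b[OF assms(3) \<pi>(1)] by blast
    then show ?thesis using \<pi>(2) unfolding cell_act_def by simp
  qed
  have P2: "coboundary d n b \<tau> = (\<Sum>j=1..<n. x j * int (n choose j))"
    if "\<tau> \<in> cells d n" "cell_dim n \<tau> = Mdim d n" for \<tau>
  proof -
    note tt = that
    obtain \<sigma> i where \<tau>: "\<tau> = (\<sigma>, i)" by (cases \<tau>)
    have ti: "i = replicate (n-1) d" "is_perm_word n \<sigma>" using Mcell[OF assms(1,2)] tt \<tau> by auto
    define F where "F j = {s'. is_perm_word n s' \<and> sorted_wrt (R \<sigma>) (take j s') \<and> sorted_wrt (R \<sigma>) (drop j s')}" for j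
    have cF: "card (F j) = n choose j" if "j \<le> n" for j unfolding F_def using count[OF ti(2) that] .
    have fF: "finite (F j)" if "j < n" for j
    proof -
      have "card (F j) > 0" using cF[of j] that by (simp add: zero_less_binomial)
      then show ?thesis by (rule card_ge_0_finite)
    qed
    let ?h = "\<lambda>(j, s'). (s', idx_j d n j)"
    have setq: "{c \<in> cells d n. cell_dim n c = Mdim d n - 1 \<and> face c \<tau>} = ?h ` (SIGMA j:{1..<n}. F j)"
    proof (intro equalityI subsetI)
      fix c assume "c \<in> {c \<in> cells d n. cell_dim n c = Mdim d n - 1 \<and> face c \<tau>}"
      then have h: "c \<in> cells d n" "cell_dim n c = Mdim d n - 1" "face c \<tau>" by auto
      then obtain j s' where js: "j \<in> {1..<n}" "is_perm_word n s'" "c = (s', idx_j d n j)"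
        using Mm1cell[OF assms(1,2)] by blast
      have "s' \<in> F j" using h(3) face_iff[OF ti(2) js(2) assms(1)] js unfolding F_def \<tau> ti(1) by auto
      then show "c \<in> ?h ` (SIGMA j:{1..<n}. F j)" using js by force
    next
      fix c assume "c \<in> ?h ` (SIGMA j:{1..<n}. F j)"
      then obtain j s' where js: "j \<in> {1..<n}" "s' \<in> F j" "c = (s', idx_j d n j)" by auto
      have "c \<in> cells d n \<and> cell_dim n c = Mdim d n - 1"
        using Mm1cell[OF assms(1,2)] js unfolding F_def by blast
      moreover have "face c \<tau>" using face_iff[OF ti(2) _ assms(1)] js unfolding F_def \<tau> ti(1) by auto
      ultimately show "c \<in> {c \<in> cells d n. cell_dim n c = Mdim d n - 1 \<and> face c \<tau>}" by auto
    qed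
    have injh: "inj_on ?h (SIGMA j:{1..<n}. F j)"
      using idx_inj[OF assms(1)] by (intro inj_onI) auto
    have e1: "b \<circ> ?h = (\<lambda>(j, s'). b (s', idx_j d n j))" by (auto simp: fun_eq_iff)
    have "coboundary d n b \<tau> = (\<Sum>(j, s')\<in>(SIGMA j:{1..<n}. F j). b (s', idx_j d n j))"
      unfolding coboundary_def setq sum.reindex[OF injh] e1 ..
    also have "\<dots> = (\<Sum>j\<in>{1..<n}. \<Sum>s'\<in>F j. b (s', idx_j d n j))"
      by (rule sum.Sigma[symmetric]) (use fF in auto)
    also have "\<dots> = (\<Sum>j\<in>{1..<n}. \<Sum>s'\<in>F j. x j)"
      by (intro sum.cong refl) (use P1 in \<open>auto simp: F_def\<close>)
    also have "\<dots> = (\<Sum>j=1..<n. x j * int (n choose j))"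
      by (intro sum.cong refl) (simp add: cF mult.commute)
    finally show ?thesis .
  qed
  show ?thesis using P1 P2 by blast
qed


end
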